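(* Consider the following data structure on a fully dynamic unweighted graph, for a parameter $0<\epsilon<1/2$. It stores a matching $M$, a counter $t$, and has access (via an oracle) to a vertex cover $V_{cover}$ of the current graph of size at most twice the size of a maximum matching of the current graph. Initially $M$ is a $(1+\epsilon/4)$-MCM of the initial graph (empty if the graph is empty) and $t=\frac{\epsilon}{4}|M|$. On each update (insertion or deletion of edge $(u,v)$): if the update deletes an edge $(u,v)\in M$, remove it from $M$; set $t\leftarrow t-1$; if $t\le 0$, construct a core subgraph $G'$ of the current graph using $V_{cover}$, set $M$ to a $(1+\epsilon/4)$-MCM of $G'$ computed by a static algorithm running in $O(|E(G')|\epsilon^{-1})$ time, and set $t\leftarrow\frac{\epsilon}{4}|M|$. Then after every update $M$ is a $(1+\epsilon)$-MCM of the current graph, and the amortized cost per update is $O(\sqrt{m}\,\epsilon^{-2})$.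
   Context: A fully dynamic graph undergoes a sequence of single-edge insertions and deletions; $m$ is the number of edges. A matching $M$ of a graph $H$ is a $(1+\delta)$-MCM if $|M|\ge\frac{1}{1+\delta}$ times the maximum matching size of $H$. A vertex cover is a vertex set meeting every edge. Given a graph $G=(V,E)$ and a vertex cover $V_{cover}$, a core subgraph consists of all edges with both endpoints in $V_{cover}$ together with, for each $v\in V_{cover}$, up to $|V_{cover}|+1$ arbitrary edges from $v$ to $V\setminus V_{cover}$ (all of them if fewer exist); it can be built in $O(|V_{cover}|^2)$ time. *)

theory Defs
  imports Complex_Main
begin

definition graph :: "'v set set \<Rightarrow> bool" where
  "graph E \<longleftrightarrow> finite E \<and> (\<forall>e\<in>E. card e = 2)"

definition matching :: "'v set set \<Rightarrow> bool" where
  "matching M \<longleftrightarrow> (\<forall>e1\<in>M. \<forall>e2\<in>M. e1 \<noteq> e2 \<longrightarrow> e1 \<inter> e2 = {})"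

definition matching_of :: "'v set set \<Rightarrow> 'v set set \<Rightarrow> bool" where
  "matching_of M E \<longleftrightarrow> M \<subseteq> E \<and> matching M"

definition mm_size :: "'v set set \<Rightarrow> nat" where
  "mm_size E = Max {card M | M. matching_of M E}"

definition approx_mcm :: "real \<Rightarrow> 'v set set \<Rightarrow> 'v set set \<Rightarrow> bool" where
  "approx_mcm \<delta> M E \<longleftrightarrow> matching_of M E \<and> real (card M) \<ge> real (mm_size E) / (1 + \<delta>)"

definition vertex_cover :: "'v set \<Rightarrow> 'v set set \<Rightarrow> bool" where
  "vertex_cover C E \<longleftrightarrow> finite C \<and> (\<forall>e\<in>E. e \<inter> C \<noteq> {})"

definition core_subgraph :: "'v set \<Rightarrow> 'v set set \<Rightarrow> 'v set set \<Rightarrow> bool" where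
  "core_subgraph C E H \<longleftrightarrow>
     (\<exists>S :: 'v \<Rightarrow> 'v set set.
        (\<forall>v\<in>C. S v \<subseteq> {e\<in>E. v \<in> e \<and> \<not> e \<subseteq> C} \<and>
               card (S v) = min (card {e\<in>E. v \<in> e \<and> \<not> e \<subseteq> C}) (card C + 1)) \<and>
        H = {e\<in>E. e \<subseteq> C} \<union> (\<Union>v\<in>C. S v))"

text \<open>Whether update number Suc i (from G i to G (Suc i)) triggers a rebuild.\<close>
definition rebuild :: "(nat \<Rightarrow> real) \<Rightarrow> nat \<Rightarrow> bool" where
  "rebuild t i \<longleftrightarrow> t i - 1 \<le> 0"

text \<open>G i: graph after i updates; M i, t i: stored matching and counter after i updates;
  Vc i: vertex cover returned by the oracle, H i: core subgraph built (used at rebuilds).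
  All choices (oracle answer, core subgraph, static MCM) are arbitrary within spec.\<close>
definition run ::
  "real \<Rightarrow> nat \<Rightarrow> (nat \<Rightarrow> 'v set set) \<Rightarrow> (nat \<Rightarrow> 'v set set) \<Rightarrow> (nat \<Rightarrow> real)
   \<Rightarrow> (nat \<Rightarrow> 'v set) \<Rightarrow> (nat \<Rightarrow> 'v set set) \<Rightarrow> bool" where
  "run \<epsilon> k G M t Vc H \<longleftrightarrow>
     (\<forall>i\<le>k. graph (G i)) \<and>
     (\<forall>i<k. \<exists>e. card e = 2 \<and>
        ((e \<notin> G i \<and> G (Suc i) = insert e (G i)) \<or> (e \<in> G i \<and> G (Suc i) = G i - {e}))) \<and>
     approx_mcm (\<epsilon>/4) (M 0) (G 0) \<and> t 0 = \<epsilon>/4 * real (card (M 0)) \<and>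
     (\<forall>i<k.
        (if rebuild t i then
           vertex_cover (Vc (Suc i)) (G (Suc i)) \<and>
           card (Vc (Suc i)) \<le> 2 * mm_size (G (Suc i)) \<and>
           core_subgraph (Vc (Suc i)) (G (Suc i)) (H (Suc i)) \<and>
           approx_mcm (\<epsilon>/4) (M (Suc i)) (H (Suc i)) \<and>
           t (Suc i) = \<epsilon>/4 * real (card (M (Suc i)))
         else
           M (Suc i) = M i - (G i - G (Suc i)) \<and> t (Suc i) = t i - 1))"

text \<open>Cost of update number Suc i: O(1) bookkeeping, plus at a rebuild the cost
  of building the core subgraph, min(|Vc|^2, current m), and of the static
  algorithm, |E(G')| / eps.\<close>
definition update_cost ::
  "real \<Rightarrow> (nat \<Rightarrow> 'v set set) \<Rightarrow> (nat \<Rightarrow> real) \<Rightarrow> (nat \<Rightarrow> 'v set) \<Rightarrow> (nat \<Rightarrow> 'v set set)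
   \<Rightarrow> nat \<Rightarrow> real" where
  "update_cost \<epsilon> G t Vc H i =
     1 + (if rebuild t i
          then real (min ((card (Vc (Suc i)))^2) (card (G (Suc i)))) + real (card (H (Suc i))) / \<epsilon>
          else 0)"

end

theory Submission
  imports Defs
begin


lemma mm_facts:
  assumes "finite E"
  shows "\<exists>M. matching_of M E \<and> card M = mm_size E"
    and "matching_of M E \<Longrightarrow> card M \<le> mm_size E"
proof -
  let ?S = "{card M | M. matching_of M E}"
  have fin: "finite ?S"
  proof -
    have "?S \<subseteq> card ` Pow E" by (auto simp: matching_of_def)
    thus ?thesis using assms by (meson finite_Pow_iff finite_imageI finite_subset)
  qed
  have "card ({}::'a set set) \<in> ?S" unfolding matching_of_def matching_def by blast
  hence ne: "?S \<noteq> {}" by blast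
  show "\<exists>M. matching_of M E \<and> card M = mm_size E"
    using Max_in[OF fin ne] unfolding mm_size_def by auto
  show "matching_of M E \<Longrightarrow> card M \<le> mm_size E"
    using Max_ge[OF fin] unfolding mm_size_def by auto
qed

lemma mm_step:
  assumes "finite A" "finite B" "A - {e} \<subseteq> B"
  shows "mm_size A \<le> mm_size B + 1"
proof -
  obtain M where M: "matching_of M A" "card M = mm_size A" using mm_facts(1)[OF assms(1)] by blast
  have fM: "finite M" using M(1) assms(1) unfolding matching_of_def by (meson finite_subset)
  have "matching_of (M - {e}) B" using M(1) assms(3) unfolding matching_of_def matching_def by blast
  hence "card (M - {e}) \<le> mm_size B" using mm_facts(2)[OF assms(2)] by blast
  moreover have "card M \<le> card (M - {e}) + 1"
  proof (cases "e \<in> M")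
    case True thus ?thesis using fM card.remove[OF fM True] by simp
  qed simp
  ultimately show ?thesis using M(2) by linarith
qed

lemma two_elem: "card f = 2 \<Longrightarrow> x \<in> f \<Longrightarrow> y \<in> f \<Longrightarrow> x \<noteq> y \<Longrightarrow> f = {x,y}"
proof -
  assume a: "card f = 2" "x \<in> f" "y \<in> f" "x \<noteq> y"
  have "finite f" using a(1) by (metis card.infinite zero_neq_numeral)
  moreover have "{x,y} \<subseteq> f" using a by auto
  moreover have "card {x,y} = card f" using a by simp
  ultimately show ?thesis by (metis card_subset_eq)
qed

lemma exchange:
  assumes gE: "graph E" and vc: "vertex_cover C E"
    and Sv: "\<forall>v\<in>C. S v \<subseteq> {e\<in>E. v \<in> e \<and> \<not> e \<subseteq> C} \<and>
               card (S v) = min (card {e\<in>E. v \<in> e \<and> \<not> e \<subseteq> C}) (card C + 1)"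
    and Hd: "H = {e\<in>E. e \<subseteq> C} \<union> (\<Union>v\<in>C. S v)"
    and N: "matching_of N E" and eN: "e \<in> N" and eH: "e \<notin> H"
  shows "\<exists>f. f \<in> H \<and> f \<notin> N \<and> matching_of (insert f (N - {e})) E"
proof -
  have fE: "finite E" and c2: "\<And>x. x \<in> E \<Longrightarrow> card x = 2" using gE unfolding graph_def by auto
  have fC: "finite C" and cov: "\<And>x. x \<in> E \<Longrightarrow> x \<inter> C \<noteq> {}" using vc unfolding vertex_cover_def by auto
  have NE: "N \<subseteq> E" and mN: "\<And>g1 g2. g1 \<in> N \<Longrightarrow> g2 \<in> N \<Longrightarrow> g1 \<noteq> g2 \<Longrightarrow> g1 \<inter> g2 = {}"
    using N unfolding matching_of_def matching_def by auto
  have fN: "finite N" using NE fE finite_subset by blast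
  have eE: "e \<in> E" using eN NE by blast
  obtain v where v: "v \<in> e" "v \<in> C" using cov[OF eE] by blast
  have nsub: "\<not> e \<subseteq> C" using eH eE Hd by blast
  define A where "A = {e\<in>E. v \<in> e \<and> \<not> e \<subseteq> C}"
  have Aprop: "\<And>f. f \<in> A \<longleftrightarrow> f \<in> E \<and> v \<in> f \<and> \<not> f \<subseteq> C" by (simp add: A_def)
  have eA: "e \<in> A" using Aprop eE v nsub by blast
  have eS: "e \<notin> S v" using eH Hd v by blast
  have SA: "S v \<subseteq> A" and cS: "card (S v) = min (card A) (card C + 1)" using Sv v A_def by auto
  have fA: "finite A" using fE A_def by simp
  have "card (S v) < card A" using SA eA eS fA by (metis psubsetI psubset_card_mono)
  hence cS2: "card (S v) = card C + 1" using cS by linarith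
  show ?thesis
  proof (rule ccontr)
    assume nex: "\<not> ?thesis"
    have meet: "\<forall>f\<in>S v. \<exists>g\<in>N - {e}. f \<inter> g \<noteq> {}"
    proof
      fix f assume fS: "f \<in> S v"
      show "\<exists>g\<in>N - {e}. f \<inter> g \<noteq> {}"
      proof (rule ccontr)
        assume dis: "\<not> ?thesis"
        have fH: "f \<in> H" using fS v Hd by blast
        have fE': "f \<in> E" using fS SA Aprop by blast
        have fne: "f \<noteq> e" using fS eS by blast
        have "f \<inter> f \<noteq> {}" using c2[OF fE'] by (metis card.empty inf.idem zero_neq_numeral)
        hence fN': "f \<notin> N" using dis fne by blast
        have dis2: "\<And>g. g \<in> N - {e} \<Longrightarrow> f \<inter> g = {}" using dis by blast
        have "matching (insert f (N - {e}))" unfolding matching_def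
        proof (intro ballI impI)
          fix g1 g2 assume g1: "g1 \<in> insert f (N - {e})" and g2: "g2 \<in> insert f (N - {e})" and ne: "g1 \<noteq> g2"
          show "g1 \<inter> g2 = {}"
          proof (cases "g1 = f")
            case True
            hence "g2 \<in> N - {e}" using g2 ne by blast
            thus ?thesis using True dis2 by blast
          next
            case False
            hence g1N: "g1 \<in> N - {e}" using g1 by blast
            show ?thesis
            proof (cases "g2 = f")
              case True thus ?thesis using dis2[OF g1N] by blast
            next
              case False
              hence "g2 \<in> N" using g2 by blast
              thus ?thesis using mN g1N ne by blast
            qed
          qed
        qed
        moreover have "insert f (N - {e}) \<subseteq> E" using NE fE' by blast
        ultimately have "matching_of (insert f (N - {e})) E" unfolding matching_of_def by blast
        thus False using nex fH fN' by blast
      qed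
    qed
    define \<phi> where "\<phi> f = (SOME g. g \<in> N - {e} \<and> f \<inter> g \<noteq> {})" for f
    have \<phi>: "\<And>f. f \<in> S v \<Longrightarrow> \<phi> f \<in> N - {e} \<and> f \<inter> \<phi> f \<noteq> {}"
    proof -
      fix f assume "f \<in> S v"
      hence "\<exists>g. g \<in> N - {e} \<and> f \<inter> g \<noteq> {}" using meet by blast
      thus "\<phi> f \<in> N - {e} \<and> f \<inter> \<phi> f \<noteq> {}" unfolding \<phi>_def by (rule someI_ex)
    qed
    have "inj_on \<phi> (S v)"
    proof (rule inj_onI)
      fix f1 f2 assume f1: "f1 \<in> S v" and f2: "f2 \<in> S v" and eq: "\<phi> f1 = \<phi> f2"
      define g where "g = \<phi> f1"
      have g: "g \<in> N - {e}" "f1 \<inter> g \<noteq> {}" "f2 \<inter> g \<noteq> {}" using \<phi>[OF f1] \<phi>[OF f2] eq g_def by auto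
      have "g \<inter> e = {}" using mN g(1) eN by blast
      hence vg: "v \<notin> g" using v by blast
      have gE: "g \<in> E" using g NE by blast
      have f1A: "f1 \<in> A" and f2A: "f2 \<in> A" using f1 f2 SA by auto
      have A1: "f1 \<in> E" "v \<in> f1" "\<not> f1 \<subseteq> C" using Aprop f1A by auto
      have A2: "f2 \<in> E" "v \<in> f2" "\<not> f2 \<subseteq> C" using Aprop f2A by auto
      obtain a1 where a1: "a1 \<in> f1" "a1 \<in> g" using g by blast
      obtain a2 where a2: "a2 \<in> f2" "a2 \<in> g" using g by blast
      have f1e: "f1 = {v, a1}" by (rule two_elem) (use A1 c2 a1 vg in auto)
      have f2e: "f2 = {v, a2}" by (rule two_elem) (use A2 c2 a2 vg in auto)
      show "f1 = f2"
      proof (rule ccontr)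
        assume "f1 \<noteq> f2"
        hence "a1 \<noteq> a2" using f1e f2e by blast
        hence "g = {a1, a2}" using two_elem[of g a1 a2] c2[OF gE] a1 a2 by blast
        hence "a1 \<in> C \<or> a2 \<in> C" using cov[OF gE] by blast
        thus False using f1e f2e A1(3) A2(3) v(2) by auto
      qed
    qed
    moreover have "\<phi> ` S v \<subseteq> N" using \<phi> by blast
    ultimately have l1: "card (S v) \<le> card N" using card_inj_on_le fN by blast
    define \<psi> where "\<psi> g = (SOME c. c \<in> g \<inter> C)" for g
    have \<psi>: "\<psi> g \<in> g \<inter> C" if gN: "g \<in> N" for g
    proof -
      have "\<exists>c. c \<in> g \<inter> C" using cov NE gN by blast
      thus ?thesis unfolding \<psi>_def by (rule someI_ex)
    qed
    have "inj_on \<psi> N"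
    proof (rule inj_onI)
      fix g1 g2 assume g12: "g1 \<in> N" "g2 \<in> N" "\<psi> g1 = \<psi> g2"
      have "\<psi> g1 \<in> g1 \<inter> g2" using \<psi>[OF g12(1)] \<psi>[OF g12(2)] g12(3) by simp
      hence "g1 \<inter> g2 \<noteq> {}" by blast
      thus "g1 = g2" using mN[OF g12(1) g12(2)] by blast
    qed
    moreover have "\<psi> ` N \<subseteq> C" using \<psi> by blast
    ultimately have "card N \<le> card C" using card_inj_on_le fC by blast
    thus False using l1 cS2 by linarith
  qed
qed



lemma core_props:
  assumes gE: "graph E" and vc: "vertex_cover C E" and cs: "core_subgraph C E H"
  shows "H \<subseteq> E" and "mm_size E \<le> mm_size H" and "card H \<le> 3 * (card C)^2"
proof -
  obtain S where Sv: "\<forall>v\<in>C. S v \<subseteq> {e\<in>E. v \<in> e \<and> \<not> e \<subseteq> C} \<and>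
               card (S v) = min (card {e\<in>E. v \<in> e \<and> \<not> e \<subseteq> C}) (card C + 1)"
    and Hd: "H = {e\<in>E. e \<subseteq> C} \<union> (\<Union>v\<in>C. S v)"
    using cs unfolding core_subgraph_def by blast
  have fE: "finite E" and c2: "\<And>x. x \<in> E \<Longrightarrow> card x = 2" using gE unfolding graph_def by auto
  have fC: "finite C" using vc unfolding vertex_cover_def by auto
  show HE: "H \<subseteq> E" using Sv Hd by blast
  have fH: "finite H" using HE fE finite_subset by blast
  have key: "\<forall>N. matching_of N E \<and> card (N - H) = n \<longrightarrow> (\<exists>N'. matching_of N' H \<and> card N' = card N)" for n
  proof (induction n rule: less_induct)
    case (less n)
    show ?case
    proof (intro allI impI)
      fix N assume a: "matching_of N E \<and> card (N - H) = n"
      have fN: "finite N" using a fE unfolding matching_of_def by (meson finite_subset)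
      show "\<exists>N'. matching_of N' H \<and> card N' = card N"
      proof (cases "N \<subseteq> H")
        case True thus ?thesis using a unfolding matching_of_def by blast
      next
        case False
        then obtain e where eN: "e \<in> N" and eH: "e \<notin> H" by blast
        obtain f where f: "f \<in> H" "f \<notin> N" "matching_of (insert f (N - {e})) E"
          using exchange[OF gE vc Sv Hd _ eN eH] a by blast
        have "insert f (N - {e}) - H = (N - H) - {e}" using f by blast
        hence "card (insert f (N - {e}) - H) < n"
          using a eN eH fN by (metis DiffI card_Diff1_less finite_Diff)
        then obtain N' where N': "matching_of N' H" "card N' = card (insert f (N - {e}))"
          using less f by blast
        have "card (insert f (N - {e})) = card N" using f(2) eN fN
          by (metis card.insert card.remove finite_Diff insert_Diff_single insert_absorb insert_iff)
        thus ?thesis using N' by auto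
      qed
    qed
  qed
  obtain N where N: "matching_of N E" "card N = mm_size E" using mm_facts(1)[OF fE] by blast
  obtain N' where "matching_of N' H" "card N' = card N" using key N by blast
  thus "mm_size E \<le> mm_size H" using mm_facts(2)[OF fH] N by metis
  define I where "I v = {e\<in>E. v \<in> e \<and> e \<subseteq> C}" for v
  have HU: "H \<subseteq> (\<Union>v\<in>C. I v \<union> S v)"
  proof
    fix e assume eH: "e \<in> H"
    show "e \<in> (\<Union>v\<in>C. I v \<union> S v)"
    proof (cases "e \<in> (\<Union>v\<in>C. S v)")
      case False
      hence eE: "e \<in> E" "e \<subseteq> C" using eH Hd by auto
      have "e \<noteq> {}" using c2[OF eE(1)] by (metis card.empty zero_neq_numeral)
      then obtain v where "v \<in> e" by blast
      thus ?thesis using eE I_def by blast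
    qed blast
  qed
  have cI: "card (I v) \<le> card C" if vC: "v \<in> C" for v
  proof -
    have "I v \<subseteq> (\<lambda>w. {v, w}) ` C"
    proof
      fix e assume eI: "e \<in> I v"
      hence eE: "e \<in> E" "v \<in> e" "e \<subseteq> C" using I_def by auto
      have "card e = 2" using c2 eE by blast
      then obtain x y where xy: "e = {x, y}" "x \<noteq> y" by (meson card_2_iff)
      show "e \<in> (\<lambda>w. {v, w}) ` C"
      proof (cases "v = x")
        case True thus ?thesis using xy eE by blast
      next
        case False hence vy: "v = y" using xy eE by blast
        hence "e = {v, x}" using xy by auto
        moreover have "x \<in> C" using xy eE by auto
        ultimately show ?thesis by blast
      qed
    qed
    thus ?thesis using fC by (meson card_image_le finite_imageI card_mono order_trans)
  qed
  have cSv: "card (S v) \<le> card C + 1" if "v \<in> C" for v using Sv that by auto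
  have fU: "finite (\<Union>v\<in>C. I v \<union> S v)"
  proof -
    have "(\<Union>v\<in>C. I v \<union> S v) \<subseteq> E" using Sv I_def by blast
    thus ?thesis using fE finite_subset by blast
  qed
  have "card H \<le> card (\<Union>v\<in>C. I v \<union> S v)" using HU fU card_mono by blast
  also have "\<dots> \<le> (\<Sum>v\<in>C. card (I v \<union> S v))" using fC card_UN_le by blast
  also have "\<dots> \<le> (\<Sum>v\<in>C. 2 * card C + 1)"
  proof (rule sum_mono)
    fix v assume "v \<in> C"
    thus "card (I v \<union> S v) \<le> 2 * card C + 1" using cI cSv card_Un_le[of "I v" "S v"] by fastforce
  qed
  also have "\<dots> = card C * (2 * card C + 1)" by simp
  also have "\<dots> \<le> 3 * (card C)^2" by (simp add: power2_eq_square algebra_simps)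
  finally show "card H \<le> 3 * (card C)^2" .
qed



lemma H1: "0 \<le> (a::real) \<Longrightarrow> 0 \<le> b \<Longrightarrow> min a b \<le> sqrt (a*b)"
proof -
  assume a: "0 \<le> a" "0 \<le> b"
  have "(min a b)^2 \<le> a*b" using a by (simp add: power2_eq_square min_def mult_mono mult_left_mono mult_right_mono)
  thus ?thesis by (rule real_le_rsqrt)
qed

lemma H2:
  fixes V mm m' h Dm \<epsilon> :: real
  assumes "0<\<epsilon>" "\<epsilon><1/2" "V \<le> 2*mm" "m' \<le> Dm" "h \<le> m'" "h \<le> 3*V^2" "0 \<le> V" "0 \<le> m'"
  shows "min (V^2) m' + h/\<epsilon> \<le> 6*mm*sqrt Dm/\<epsilon>"
proof -
  have sq: "sqrt m' \<le> sqrt Dm" using assms by simp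
  have "min (V^2) m' \<le> sqrt (V^2*m')" using H1 assms by simp
  also have "\<dots> = V * sqrt m'" using assms by (simp add: real_sqrt_mult)
  also have "\<dots> \<le> V * sqrt Dm" using sq assms by (simp add: mult_left_mono)
  finally have m1: "min (V^2) m' \<le> V * sqrt Dm" .
  have "h \<le> min m' (3*V^2)" using assms by simp
  also have "\<dots> \<le> sqrt (m' * (3*V^2))" using H1 assms by simp
  also have "\<dots> = sqrt 3 * (V * sqrt m')" using assms by (simp add: real_sqrt_mult mult_ac)
  also have "\<dots> \<le> 2 * (V * sqrt Dm)"
  proof (rule mult_mono)
    have a: "sqrt 3 \<le> sqrt ((2::real)^2)" by (rule real_sqrt_le_mono) simp
    have b: "sqrt ((2::real)^2) = 2" by (simp only: real_sqrt_abs)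
    show "sqrt 3 \<le> (2::real)" using a b by linarith
    show "V * sqrt m' \<le> V * sqrt Dm" using sq assms by (simp add: mult_left_mono)
  qed (use assms in auto)
  finally have m2: "h \<le> 2 * (V * sqrt Dm)" .
  define w where "w = V * sqrt Dm"
  have w0: "0 \<le> w" using assms w_def by simp
  have w2: "w \<le> 2*mm*sqrt Dm" using assms w_def by (simp add: mult_right_mono)
  have "h/\<epsilon> \<le> (2*w)/\<epsilon>" using m2 w_def assms by (intro divide_right_mono) auto
  hence "min (V^2) m' + h/\<epsilon> \<le> w + 2*w/\<epsilon>" using m1 w_def by linarith
  also have "\<dots> \<le> 3*w/\<epsilon>"
  proof -
    have "\<epsilon>*w \<le> 1*w" using w0 assms by (intro mult_right_mono) auto
    thus ?thesis using w0 assms by (simp add: field_simps)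
  qed
  also have "\<dots> \<le> 6*mm*sqrt Dm/\<epsilon>" using w2 assms by (simp add: divide_right_mono)
  finally show ?thesis .
qed

lemma H3:
  fixes \<epsilon> Mc mm t :: real
  assumes "0<\<epsilon>" "\<epsilon><1/2" "0 \<le> Mc" "mm \<le> (1+\<epsilon>/4)*Mc" "t = \<epsilon>/4*Mc"
  shows "mm - 9*t/(2*\<epsilon>) \<le> 0"
proof -
  have "9*t/(2*\<epsilon>) = 9/8*Mc" using assms by (simp add: field_simps)
  moreover have "(1+\<epsilon>/4)*Mc \<le> 9/8*Mc" using assms by (intro mult_right_mono) auto
  ultimately show ?thesis using assms by linarith
qed

lemma H4:
  fixes s \<epsilon> x x' :: real
  assumes "0 \<le> s" "0<\<epsilon>" "\<epsilon><1/2" "x' \<le> x + 1 + 9/(2*\<epsilon>)"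
  shows "6*s/\<epsilon>*max 0 x' \<le> 6*s/\<epsilon>*max 0 x + 30*s/\<epsilon>^2"
proof -
  have "max 0 x' \<le> max 0 x + 5/\<epsilon>"
  proof -
    have "1 + 9/(2*\<epsilon>) \<le> 5/\<epsilon>" using assms by (simp add: field_simps)
    thus ?thesis using assms by (smt (verit) divide_pos_pos)
  qed
  hence "6*s/\<epsilon>*max 0 x' \<le> 6*s/\<epsilon>*(max 0 x + 5/\<epsilon>)" using assms by (intro mult_left_mono) auto
  also have "\<dots> = 6*s/\<epsilon>*max 0 x + 30*s/\<epsilon>^2" using assms by (simp add: field_simps power2_eq_square)
  finally show ?thesis .
qed

lemma H5:
  fixes s \<epsilon> mm tt c :: real
  assumes "1 \<le> s" "0<\<epsilon>" "\<epsilon><1/2" "tt \<le> 1" "c \<le> 1 + 6*(mm+1)*s/\<epsilon>"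
  shows "c \<le> 6*s/\<epsilon>*max 0 (mm - 9*tt/(2*\<epsilon>)) + 31*s/\<epsilon>^2"
proof -
  have "\<epsilon>*\<epsilon> < 1*1" using assms by (intro mult_strict_mono) auto
  hence e2: "\<epsilon>^2 < 1" by (simp add: power2_eq_square)
  have p: "0 < \<epsilon>^2" using assms by simp
  have a1: "1 \<le> s/\<epsilon>^2" using assms e2 p by (simp add: field_simps)
  have a2: "6*s/\<epsilon> \<le> 3*s/\<epsilon>^2" using assms by (simp add: field_simps power2_eq_square)
  have "6*s/\<epsilon>*(mm - 9*tt/(2*\<epsilon>)) \<le> 6*s/\<epsilon>*max 0 (mm - 9*tt/(2*\<epsilon>))"
    using assms by (intro mult_left_mono) auto
  moreover have "6*s/\<epsilon>*(mm - 9*tt/(2*\<epsilon>)) = 6*s/\<epsilon>*mm - 27*s*tt/\<epsilon>^2"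
    using assms by (simp add: field_simps power2_eq_square)
  moreover have "27*s*tt/\<epsilon>^2 \<le> 27*s/\<epsilon>^2" using assms p by (simp add: divide_right_mono)
  moreover have "1 + 6*(mm+1)*s/\<epsilon> = 1 + 6*s/\<epsilon>*mm + 6*s/\<epsilon>" using assms by (simp add: field_simps)
  ultimately show ?thesis using assms a1 a2 by linarith
qed



lemma main:
  fixes \<epsilon> :: real and G :: "nat \<Rightarrow> 'v set set" and M t Vc H
  assumes e0: "0 < \<epsilon>" and e1: "\<epsilon> < 1/2" and R: "run \<epsilon> k G M t Vc H"
  shows "(\<forall>i\<le>k. approx_mcm \<epsilon> (M i) (G i)) \<and>
        (\<Sum>i<k. update_cost \<epsilon> G t Vc H i)
          \<le> 31 * real k * sqrt (real (Max ((\<lambda>i. card (G i)) ` {0..k}))) / \<epsilon>^2"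
proof -
  have gr: "\<And>i. i \<le> k \<Longrightarrow> graph (G i)"
    and upd: "\<And>i. i < k \<Longrightarrow> \<exists>e. card e = 2 \<and>
        ((e \<notin> G i \<and> G (Suc i) = insert e (G i)) \<or> (e \<in> G i \<and> G (Suc i) = G i - {e}))"
    and init: "approx_mcm (\<epsilon>/4) (M 0) (G 0)" and t0: "t 0 = \<epsilon>/4 * real (card (M 0))"
    and stp: "\<And>i. i < k \<Longrightarrow> (if rebuild t i then
           vertex_cover (Vc (Suc i)) (G (Suc i)) \<and>
           card (Vc (Suc i)) \<le> 2 * mm_size (G (Suc i)) \<and>
           core_subgraph (Vc (Suc i)) (G (Suc i)) (H (Suc i)) \<and>
           approx_mcm (\<epsilon>/4) (M (Suc i)) (H (Suc i)) \<and>
           t (Suc i) = \<epsilon>/4 * real (card (M (Suc i)))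
         else
           M (Suc i) = M i - (G i - G (Suc i)) \<and> t (Suc i) = t i - 1)"
    using R unfolding run_def by auto
  define Dm where "Dm = Max ((\<lambda>i. card (G i)) ` {0..k})"
  define s where "s = sqrt (real Dm)"
  define mmr where "mmr j = real (mm_size (G j))" for j
  define Mc where "Mc j = real (card (M j))" for j
  have fG: "finite (G i)" if "i \<le> k" for i using gr[OF that] unfolding graph_def by auto
  have cle: "card (G i) \<le> Dm" if "i \<le> k" for i unfolding Dm_def using that by (intro Max_ge) auto
  have mmup: "mmr (Suc i) \<le> mmr i + 1" if ik: "i < k" for i
  proof -
    obtain e where e: "(G (Suc i) = insert e (G i)) \<or> (G (Suc i) = G i - {e})" using upd[OF ik] by blast
    have "G (Suc i) - {e} \<subseteq> G i" using e by blast
    hence "mm_size (G (Suc i)) \<le> mm_size (G i) + 1" using fG ik by (intro mm_step) auto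
    thus ?thesis unfolding mmr_def by simp
  qed
  have Gdiff: "\<exists>e. G i - G (Suc i) \<subseteq> {e}" if ik: "i < k" for i using upd[OF ik] by blast
  have rb: "matching_of (M (Suc i)) (G (Suc i)) \<and> mmr (Suc i) \<le> (1+\<epsilon>/4) * Mc (Suc i)
      \<and> t (Suc i) = \<epsilon>/4 * Mc (Suc i) \<and> update_cost \<epsilon> G t Vc H i \<le> 1 + 6 * mmr (Suc i) * s / \<epsilon>"
    if ik: "i < k" and r: "rebuild t i" for i
  proof -
    have A: "vertex_cover (Vc (Suc i)) (G (Suc i))" "card (Vc (Suc i)) \<le> 2 * mm_size (G (Suc i))"
      "core_subgraph (Vc (Suc i)) (G (Suc i)) (H (Suc i))" "approx_mcm (\<epsilon>/4) (M (Suc i)) (H (Suc i))"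
      "t (Suc i) = \<epsilon>/4 * real (card (M (Suc i)))" using stp[OF ik] r by auto
    have gS: "graph (G (Suc i))" using gr ik by simp
    note cp = core_props[OF gS A(1) A(3)]
    have fH: "finite (H (Suc i))" using cp(1) fG ik finite_subset by (metis Suc_leI)
    have m1: "matching_of (M (Suc i)) (G (Suc i))" using A(4) cp(1) unfolding approx_mcm_def matching_of_def by blast
    have "real (mm_size (H (Suc i))) / (1 + \<epsilon>/4) \<le> Mc (Suc i)" using A(4) unfolding approx_mcm_def Mc_def by blast
    hence "real (mm_size (H (Suc i))) \<le> (1 + \<epsilon>/4) * Mc (Suc i)" using e0 by (simp add: divide_le_eq mult.commute)
    hence m2: "mmr (Suc i) \<le> (1+\<epsilon>/4) * Mc (Suc i)" using cp(2) unfolding mmr_def by linarith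
    have cH1: "card (H (Suc i)) \<le> card (G (Suc i))" using cp(1) fG ik by (simp add: card_mono Suc_leI)
    have "min (real (card (Vc (Suc i))) ^ 2) (real (card (G (Suc i)))) + real (card (H (Suc i))) / \<epsilon>
        \<le> 6 * mmr (Suc i) * sqrt (real Dm) / \<epsilon>"
    proof (rule H2)
      show "real (card (Vc (Suc i))) \<le> 2 * mmr (Suc i)" using A(2) unfolding mmr_def by simp
      show "real (card (G (Suc i))) \<le> real Dm" using cle ik by (simp add: Suc_leI)
      show "real (card (H (Suc i))) \<le> real (card (G (Suc i)))" using cH1 by simp
      show "real (card (H (Suc i))) \<le> 3 * (real (card (Vc (Suc i))))^2" using cp(3)
        by (metis of_nat_le_iff of_nat_mult of_nat_numeral of_nat_power)
    qed (use e0 e1 in auto)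
    hence "update_cost \<epsilon> G t Vc H i \<le> 1 + 6 * mmr (Suc i) * s / \<epsilon>"
      unfolding update_cost_def s_def using r by (simp add: of_nat_min)
    thus ?thesis using m1 m2 A(5) Mc_def by simp
  qed
  have nrb: "matching_of (M (Suc i)) (G (Suc i)) \<and> Mc i \<le> Mc (Suc i) + 1
      \<and> t (Suc i) = t i - 1 \<and> update_cost \<epsilon> G t Vc H i = 1"
    if ik: "i < k" and r: "\<not> rebuild t i" and mi: "matching_of (M i) (G i)" for i
  proof -
    have A: "M (Suc i) = M i - (G i - G (Suc i))" "t (Suc i) = t i - 1" using stp[OF ik] r by auto
    obtain e where e: "G i - G (Suc i) \<subseteq> {e}" using Gdiff[OF ik] by blast
    have m1: "matching_of (M (Suc i)) (G (Suc i))" using mi A(1) unfolding matching_of_def matching_def by blast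
    have fM: "finite (M i)" using mi fG ik unfolding matching_of_def by (meson finite_subset less_imp_le)
    have "card (M i) \<le> card (M i - {e}) + 1"
    proof (cases "e \<in> M i")
      case True thus ?thesis using card.remove[OF fM True] by simp
    qed simp
    moreover have "card (M i - {e}) \<le> card (M (Suc i))" using A(1) e fM by (intro card_mono) auto
    ultimately have "Mc i \<le> Mc (Suc i) + 1" unfolding Mc_def by simp
    thus ?thesis using m1 A(2) r unfolding update_cost_def by simp
  qed
  have inv: "0 \<le> t j \<and> mmr j + 3 * t j \<le> (1+\<epsilon>) * Mc j \<and> matching_of (M j) (G j)" if "j \<le> k" for j
    using that
  proof (induction j)
    case 0
    have m: "matching_of (M 0) (G 0)" and "real (mm_size (G 0)) / (1 + \<epsilon>/4) \<le> Mc 0"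
      using init unfolding approx_mcm_def Mc_def by auto
    hence "mmr 0 \<le> (1 + \<epsilon>/4) * Mc 0" using e0 unfolding mmr_def by (simp add: divide_le_eq mult.commute)
    moreover have "0 \<le> Mc 0" unfolding Mc_def by simp
    moreover have t0': "t 0 = \<epsilon>/4 * Mc 0" using t0 Mc_def by simp
    moreover have "0 \<le> \<epsilon> * Mc 0" using e0 \<open>0 \<le> Mc 0\<close> by simp
    ultimately have "0 \<le> t 0" "mmr 0 + 3 * t 0 \<le> (1+\<epsilon>) * Mc 0" by (auto simp: algebra_simps)
    thus ?case using m by simp
  next
    case (Suc j)
    hence jk: "j < k" by simp
    have IH: "0 \<le> t j" "mmr j + 3 * t j \<le> (1+\<epsilon>) * Mc j" "matching_of (M j) (G j)" using Suc by auto
    show ?case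
    proof (cases "rebuild t j")
      case True
      note X = rb[OF jk True]
      have "0 \<le> Mc (Suc j)" unfolding Mc_def by simp
      hence "0 \<le> \<epsilon> * Mc (Suc j)" using e0 by simp
      thus ?thesis using X e0 by (auto simp: algebra_simps)
    next
      case False
      note X = nrb[OF jk False IH(3)]
      have tp: "0 < t j - 1" using False unfolding rebuild_def by simp
      have "(1+\<epsilon>) * Mc j \<le> (1+\<epsilon>) * (Mc (Suc j) + 1)" using X e0 by (intro mult_left_mono) auto
      thus ?thesis using X tp IH mmup[OF jk] e1 by (simp add: algebra_simps)
    qed
  qed
  have part1: "\<forall>i\<le>k. approx_mcm \<epsilon> (M i) (G i)"
  proof (intro allI impI)
    fix i assume ik: "i \<le> k"
    note I = inv[OF ik]
    have "mmr i \<le> (1+\<epsilon>) * Mc i" using I by linarith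
    hence "mmr i / (1+\<epsilon>) \<le> Mc i" using e0 by (simp add: divide_le_eq mult.commute)
    thus "approx_mcm \<epsilon> (M i) (G i)" using I unfolding approx_mcm_def mmr_def Mc_def by simp
  qed
  show ?thesis
  proof (cases "k = 0")
    case True thus ?thesis using part1 by simp
  next
    case False
    have s1: "1 \<le> s"
    proof -
      obtain e where e: "card e = 2" "(e \<notin> G 0 \<and> G 1 = insert e (G 0)) \<or> (e \<in> G 0 \<and> G 1 = G 0 - {e})"
        using upd[of 0] False by auto
      have "\<exists>j\<le>k. G j \<noteq> {}" using e False by (metis empty_iff insertI1 le0 less_one not_less One_nat_def Suc_leI neq0_conv)
      then obtain j where j: "j \<le> k" "G j \<noteq> {}" by blast
      have "1 \<le> card (G j)" using fG[OF j(1)] j(2) by (simp add: Suc_leI card_gt_0_iff)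
      hence "1 \<le> Dm" using cle[OF j(1)] by linarith
      thus ?thesis unfolding s_def by simp
    qed
    define P where "P j = 6*s/\<epsilon> * max 0 (mmr j - 9 * t j / (2*\<epsilon>))" for j
    have D0: "mmr j - 9 * t j / (2*\<epsilon>) \<le> 0" if "mmr j \<le> (1+\<epsilon>/4) * Mc j" "t j = \<epsilon>/4 * Mc j" for j
      using H3[OF e0 e1 _ that] unfolding Mc_def by simp
    have P0: "P 0 = 0"
    proof -
      have "real (mm_size (G 0)) / (1 + \<epsilon>/4) \<le> Mc 0" using init unfolding approx_mcm_def Mc_def by auto
      hence "mmr 0 \<le> (1 + \<epsilon>/4) * Mc 0" using e0 unfolding mmr_def by (simp add: divide_le_eq mult.commute)
      moreover have "t 0 = \<epsilon>/4 * Mc 0" using t0 Mc_def by simp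
      ultimately have "mmr 0 - 9 * t 0 / (2*\<epsilon>) \<le> 0" by (rule D0)
      thus ?thesis unfolding P_def by (simp add: max_def)
    qed
    have amort: "(\<Sum>i<n. update_cost \<epsilon> G t Vc H i) + P n \<le> real n * (31*s/\<epsilon>^2)" if "n \<le> k" for n
      using that
    proof (induction n)
      case 0 thus ?case using P0 by simp
    next
      case (Suc n)
      hence nk: "n < k" by simp
      have IH: "(\<Sum>i<n. update_cost \<epsilon> G t Vc H i) + P n \<le> real n * (31*s/\<epsilon>^2)" using Suc by simp
      have step: "update_cost \<epsilon> G t Vc H n + P (Suc n) \<le> P n + 31*s/\<epsilon>^2"
      proof (cases "rebuild t n")
        case True
        note X = rb[OF nk True]
        have "mmr (Suc n) - 9 * t (Suc n) / (2*\<epsilon>) \<le> 0" by (rule D0) (use X in auto)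
        hence "P (Suc n) = 0" unfolding P_def by (simp add: max_def)
        moreover have "update_cost \<epsilon> G t Vc H n \<le> 1 + 6*(mmr n + 1)*s/\<epsilon>"
        proof -
          have "6 * mmr (Suc n) * s / \<epsilon> \<le> 6*(mmr n + 1)*s/\<epsilon>"
            using mmup[OF nk] s1 e0 by (intro divide_right_mono mult_right_mono) auto
          thus ?thesis using X by linarith
        qed
        moreover have "t n \<le> 1" using True unfolding rebuild_def by simp
        ultimately have "update_cost \<epsilon> G t Vc H n \<le> P n + 31*s/\<epsilon>^2"
          unfolding P_def using H5[OF s1 e0 e1] by blast
        thus ?thesis using \<open>P (Suc n) = 0\<close> by simp
      next
        case False
        have mi: "matching_of (M n) (G n)" using inv[of n] nk by simp
        note X = nrb[OF nk False mi]
        have tt: "9 * t (Suc n) / (2 * \<epsilon>) = 9 * t n / (2 * \<epsilon>) - 9 / (2 * \<epsilon>)"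
        proof -
          have "t (Suc n) = t n - 1" using X by simp
          thus ?thesis by (simp add: diff_divide_distrib[symmetric] right_diff_distrib)
        qed
        have "P (Suc n) \<le> P n + 30*s/\<epsilon>^2" unfolding P_def
        proof (rule H4)
          show "mmr (Suc n) - 9 * t (Suc n) / (2 * \<epsilon>) \<le> mmr n - 9 * t n / (2 * \<epsilon>) + 1 + 9 / (2 * \<epsilon>)"
            using tt mmup[OF nk] by linarith
        qed (use s1 e0 e1 in auto)
        moreover have "1 \<le> s/\<epsilon>^2"
        proof -
          have "\<epsilon>*\<epsilon> < 1*1" using e0 e1 by (intro mult_strict_mono) auto
          thus ?thesis using s1 e0 by (simp add: field_simps power2_eq_square)
        qed
        ultimately show ?thesis using X by simp
      qed
      have r1: "real (Suc n) * (31*s/\<epsilon>^2) = real n * (31*s/\<epsilon>^2) + 31*s/\<epsilon>^2" by (metis add.commute distrib_right mult_1_left of_nat_Suc)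
      have r2: "(\<Sum>i<Suc n. update_cost \<epsilon> G t Vc H i) = (\<Sum>i<n. update_cost \<epsilon> G t Vc H i) + update_cost \<epsilon> G t Vc H n" by simp
      show ?case using IH step r1 r2 by linarith
    qed
    have "P k \<ge> 0" unfolding P_def using s1 e0 by simp
    hence "(\<Sum>i<k. update_cost \<epsilon> G t Vc H i) \<le> real k * (31*s/\<epsilon>^2)" using amort[of k] by simp
    thus ?thesis using part1 unfolding s_def Dm_def by (simp add: mult_ac)
  qed
qed


theorem theorem4:
  "\<exists>C::real. C > 0 \<and>
     (\<forall>(\<epsilon>::real) (k::nat) (G :: nat \<Rightarrow> 'v set set) M t Vc H.
        0 < \<epsilon> \<and> \<epsilon> < 1/2 \<and> run \<epsilon> k G M t Vc H \<longrightarrow>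
        (\<forall>i\<le>k. approx_mcm \<epsilon> (M i) (G i)) \<and>
        (\<Sum>i<k. update_cost \<epsilon> G t Vc H i)
          \<le> C * real k * sqrt (real (Max ((\<lambda>i. card (G i)) ` {0..k}))) / \<epsilon>^2)"
proof (rule exI[of _ 31], rule conjI)
  show "(0::real) < 31" by simp
next
  show "\<forall>(\<epsilon>::real) (k::nat) (G :: nat \<Rightarrow> 'v set set) M t Vc H.
        0 < \<epsilon> \<and> \<epsilon> < 1/2 \<and> run \<epsilon> k G M t Vc H \<longrightarrow>
        (\<forall>i\<le>k. approx_mcm \<epsilon> (M i) (G i)) \<and>
        (\<Sum>i<k. update_cost \<epsilon> G t Vc H i)
          \<le> 31 * real k * sqrt (real (Max ((\<lambda>i. card (G i)) ` {0..k}))) / \<epsilon>^2"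
  proof (intro allI impI)
    fix \<epsilon> :: real and k :: nat and G :: "nat \<Rightarrow> 'v set set" and M t Vc H
    assume a: "0 < \<epsilon> \<and> \<epsilon> < 1/2 \<and> run \<epsilon> k G M t Vc H"
    show "(\<forall>i\<le>k. approx_mcm \<epsilon> (M i) (G i)) \<and>
        (\<Sum>i<k. update_cost \<epsilon> G t Vc H i)
          \<le> 31 * real k * sqrt (real (Max ((\<lambda>i. card (G i)) ` {0..k}))) / \<epsilon>^2"
      using main[of \<epsilon> k G M t Vc H] a by blast
  qed
qed

end
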